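(* Let $\mathbb{F}$ be a field of characteristic $2$, $V$ a finite-dimensional $\mathbb{F}$-vector space and $b$ a non-degenerate symmetric bilinear form on $V$. Let $\mathcal{V}$ be a linear subspace of $\mathcal{S}_b$ all of whose elements are nilpotent. Let $x \in V\setminus\{0\}$ with $b(x,x)=0$, let $u \in \mathcal{V}$ with $b(x,u(x))=0$, and let $y \in \{x\}^\perp \setminus \mathbb{F}x$ be such that $x \wedge_b y \in \mathcal{V}$. Then $b_a(u(x), y) = 0$.
   Context: $\mathcal{S}_b$ is the space of $b$-symmetric endomorphisms of $V$ (those $u$ for which $(z,w)\mapsto b(z,u(w))$ is symmetric). $\{x\}^\perp=\{z\in V: b(x,z)=0\}$. For $x,y\in V$, $x \wedge_b y$ is the endomorphism $z \mapsto b(y,z)\,x - b(x,z)\,y$. With $Q(z)=b(z,z)$ and $\sqrt{\cdot}$ the (unique) square root in an algebraic closure $\overline{\mathbb{F}}$ of $\mathbb{F}$, the a-transform of $b$ is $b_a(z,w) := b(z,w) + \sqrt{Q(z)Q(w)} \in \overline{\mathbb{F}}$. *)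

theory Defs
  imports Main "HOL-Algebra.Algebraic_Closure_Type"
begin

text \<open>Square root in the algebraic closure (unique in characteristic 2).\<close>
definition ac_sqrt :: "'a::field alg_closure \<Rightarrow> 'a alg_closure" where
  "ac_sqrt c = (THE s. s ^ 2 = c)"

definition qform :: "('v \<Rightarrow> 'v \<Rightarrow> 'a) \<Rightarrow> 'v \<Rightarrow> 'a" where
  "qform b z = b z z"

definition a_transform :: "('v \<Rightarrow> 'v \<Rightarrow> 'a::field) \<Rightarrow> 'v \<Rightarrow> 'v \<Rightarrow> 'a alg_closure" where
  "a_transform b z w = to_ac (b z w) + ac_sqrt (to_ac (qform b z * qform b w))"

definition bilinear_form :: "('a::field \<Rightarrow> 'v::ab_group_add \<Rightarrow> 'v) \<Rightarrow> ('v \<Rightarrow> 'v \<Rightarrow> 'a) \<Rightarrow> bool" where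
  "bilinear_form scale b \<longleftrightarrow>
     (\<forall>x. Vector_Spaces.linear scale (*) (b x)) \<and> (\<forall>y. Vector_Spaces.linear scale (*) (\<lambda>x. b x y))"

definition symmetric_form :: "('v \<Rightarrow> 'v \<Rightarrow> 'a) \<Rightarrow> bool" where
  "symmetric_form b \<longleftrightarrow> (\<forall>x y. b x y = b y x)"

definition nondegenerate_form :: "('v::zero \<Rightarrow> 'v \<Rightarrow> 'a::zero) \<Rightarrow> bool" where
  "nondegenerate_form b \<longleftrightarrow> (\<forall>x. (\<forall>z. b x z = 0) \<longrightarrow> x = 0)"

definition b_symmetric_endos :: "('a::field \<Rightarrow> 'v::ab_group_add \<Rightarrow> 'v) \<Rightarrow> ('v \<Rightarrow> 'v \<Rightarrow> 'a) \<Rightarrow> ('v \<Rightarrow> 'v) set" where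
  "b_symmetric_endos scale b =
     {u. Vector_Spaces.linear scale scale u \<and> (\<forall>z w. b z (u w) = b w (u z))}"

definition endo_subspace :: "('a \<Rightarrow> 'v::ab_group_add \<Rightarrow> 'v) \<Rightarrow> ('v \<Rightarrow> 'v) set \<Rightarrow> bool" where
  "endo_subspace scale W \<longleftrightarrow>
     (\<lambda>_. 0) \<in> W \<and> (\<forall>u\<in>W. \<forall>v\<in>W. (\<lambda>z. u z + v z) \<in> W) \<and>
     (\<forall>c. \<forall>u\<in>W. (\<lambda>z. scale c (u z)) \<in> W)"

definition nilpotent_endo :: "('v::zero \<Rightarrow> 'v) \<Rightarrow> bool" where
  "nilpotent_endo u \<longleftrightarrow> (\<exists>k. (u ^^ k) = (\<lambda>_. 0))"

definition wedge_b :: "('a \<Rightarrow> 'v::ab_group_add \<Rightarrow> 'v) \<Rightarrow> ('v \<Rightarrow> 'v \<Rightarrow> 'a) \<Rightarrow> 'v \<Rightarrow> 'v \<Rightarrow> ('v \<Rightarrow> 'v)" where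
  "wedge_b scale b x y = (\<lambda>z. scale (b y z) x - scale (b x z) y)"

end

theory Submission
  imports Defs "HOL-Computational_Algebra.Polynomial"
begin

lemma lin_funpow:
  assumes vs: "vector_space scale" and l: "Vector_Spaces.linear scale scale u"
  shows "Vector_Spaces.linear scale scale (u ^^ k)"
proof (induction k)
  case 0
  then show ?case using vector_space.linear_id[OF vs] by (simp add: id_def)
next
  case (Suc k)
  have "Vector_Spaces.linear scale scale (u \<circ> u ^^ k)" by (rule Vector_Spaces.linear_compose[OF Suc l])
  then show ?case by (simp add: comp_def)
qed

lemma funpow_zero_beyond:
  assumes l: "Vector_Spaces.linear scale scale u" and k: "(u ^^ k) = (\<lambda>_. 0)" and n: "k \<le> n"
  shows "(u ^^ n) z = 0"
proof -
  have mh: "module_hom scale scale u" using l by (simp add: module_hom_iff_linear)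
  have z: "(u ^^ j) 0 = 0" for j
    by (induction j) (auto simp: module_hom.zero[OF mh])
  have "u ^^ n = (u ^^ (n - k)) \<circ> (u ^^ k)" using n by (simp add: funpow_add[symmetric])
  then show ?thesis using k z by simp
qed

lemma telescope:
  assumes l: "Vector_Spaces.linear scale scale u"
    and v: "v = (\<lambda>z. u z + w z)"
  shows "(v ^^ m) z - (u ^^ m) z = (\<Sum>i<m. (u ^^ i) (w ((v ^^ (m - 1 - i)) z)))"
proof (induction m)
  case 0
  then show ?case by simp
next
  case (Suc m)
  have mh: "module_hom scale scale u" using l by (simp add: module_hom_iff_linear)
  have "(v ^^ Suc m) z - (u ^^ Suc m) z = u ((v ^^ m) z - (u ^^ m) z) + w ((v ^^ m) z)"
    by (simp add: v module_hom.diff[OF mh])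
  also have "\<dots> = u (\<Sum>i<m. (u ^^ i) (w ((v ^^ (m - 1 - i)) z))) + w ((v ^^ m) z)"
    using Suc by simp
  also have "\<dots> = (\<Sum>i<m. (u ^^ Suc i) (w ((v ^^ (m - Suc i)) z))) + (u ^^ 0) (w ((v ^^ (m - 0)) z))"
    by (simp add: module_hom.sum[OF mh])
  also have "\<dots> = (\<Sum>i<Suc m. (u ^^ i) (w ((v ^^ (Suc m - 1 - i)) z)))"
    by (subst sum.lessThan_Suc_shift) simp
  finally show ?case .
qed

lemma usym_pow:
  assumes us: "\<forall>z w. b z (u w) = b w (u z)" and sym: "\<forall>z w. b z w = b w z"
  shows "b z ((u ^^ k) w) = b w ((u ^^ k) z)"
proof (induction k arbitrary: z w)
  case 0
  then show ?case using sym by simp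
next
  case (Suc k)
  have "b z ((u ^^ Suc k) w) = b z (u ((u ^^ k) w))" by simp
  also have "\<dots> = b ((u ^^ k) w) (u z)" using us by simp
  also have "\<dots> = b (u z) ((u ^^ k) w)" using sym by simp
  also have "\<dots> = b w ((u ^^ k) (u z))" using Suc by simp
  also have "\<dots> = b w ((u ^^ Suc k) z)" by (simp add: funpow_swap1)
  finally show ?case .
qed

theorem lemma4p10:
  fixes scale :: "'a::field \<Rightarrow> 'v::ab_group_add \<Rightarrow> 'v"
    and b :: "'v \<Rightarrow> 'v \<Rightarrow> 'a"
    and VV :: "('v \<Rightarrow> 'v) set"
    and x y :: 'v and u :: "'v \<Rightarrow> 'v"
  assumes char2: "CHAR('a) = 2"
    and vs: "vector_space scale"
    and findim: "\<exists>B. finite B \<and> module.span scale B = UNIV"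
    and bil: "bilinear_form scale b"
    and sym: "symmetric_form b"
    and nondeg: "nondegenerate_form b"
    and sub: "endo_subspace scale VV"
    and subS: "VV \<subseteq> b_symmetric_endos scale b"
    and nil: "\<forall>v\<in>VV. nilpotent_endo v"
    and x_ne: "x \<noteq> 0"
    and x_iso: "b x x = 0"
    and u_in: "u \<in> VV"
    and bxux: "b x (u x) = 0"
    and y_perp: "b x y = 0"
    and y_notin: "y \<notin> range (\<lambda>c. scale c x)"
    and wedge_in: "wedge_b scale b x y \<in> VV"
  shows "a_transform b (u x) y = 0"
proof -
  define w where "w = wedge_b scale b x y"
  define v where "v = (\<lambda>z. u z + w z)"
  have v_in: "v \<in> VV" using sub u_in wedge_in unfolding endo_subspace_def v_def w_def by blast
  have lu: "Vector_Spaces.linear scale scale u" using subS u_in by (auto simp: b_symmetric_endos_def)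
  have lv: "Vector_Spaces.linear scale scale v" using subS v_in by (auto simp: b_symmetric_endos_def)
  have usym: "\<forall>z w. b z (u w) = b w (u z)" using subS u_in by (auto simp: b_symmetric_endos_def)
  have symb: "\<forall>z w. b z w = b w z" using sym by (simp add: symmetric_form_def)
  have lb: "Vector_Spaces.linear scale (*) (b p)" for p using bil by (simp add: bilinear_form_def)
  obtain K1 where K1: "(u ^^ K1) = (\<lambda>_. 0)" using nil u_in by (auto simp: nilpotent_endo_def)
  obtain K2 where K2: "(v ^^ K2) = (\<lambda>_. 0)" using nil v_in by (auto simp: nilpotent_endo_def)
  define K where "K = max K1 K2"
  have uz: "(u ^^ n) z = 0" if "K \<le> n" for n z
    using funpow_zero_beyond[OF lu K1] that by (simp add: K_def)
  have vz: "(v ^^ n) z = 0" if "K \<le> n" for n z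
    using funpow_zero_beyond[OF lv K2] that by (simp add: K_def)
  have b0: "b p 0 = 0" for p
    using module_hom.zero[of scale "(*)" "b p"] lb[of p] by (simp add: module_hom_iff_linear)
  define G where "G (f::'v\<Rightarrow>'v) p q = (\<Sum>k<K. monom (b p ((f ^^ k) q)) k)" for f p q
  have cG: "coeff (G f p q) n = b p ((f ^^ n) q)" if "f = u \<or> f = v" for f p q n
  proof -
    have "coeff (G f p q) n = (\<Sum>k<K. if k = n then b p ((f ^^ k) q) else 0)"
      by (simp add: G_def coeff_sum)
    also have "\<dots> = (if n < K then b p ((f ^^ n) q) else 0)"
      by (simp add: sum.delta')
    also have "\<dots> = b p ((f ^^ n) q)"
      using that uz vz b0 by auto
    finally show ?thesis .
  qed
  have lbu: "module_hom scale (*) (\<lambda>z. b p ((u ^^ i) z))" for p i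
    using Vector_Spaces.linear_compose[OF lin_funpow[OF vs lu, of i] lb[of p]]
    by (simp add: module_hom_iff_linear comp_def)
  have lbp: "module_hom scale (*) (b p)" for p using lb[of p] by (simp add: module_hom_iff_linear)
  have wdef: "w t = scale (b y t) x - scale (b x t) y" for t by (simp add: w_def wedge_b_def)
  have star: "G u p q - G v p q = - pCons 0 (G u p x * G v y q - G u p y * G v x q)" for p q
  proof (rule poly_eqI)
    fix n
    show "coeff (G u p q - G v p q) n = coeff (- pCons 0 (G u p x * G v y q - G u p y * G v x q)) n"
    proof (cases n)
      case 0
      then show ?thesis by (simp add: cG)
    next
      case (Suc m)
      have "coeff (G u p q - G v p q) n = - b p ((v ^^ Suc m) q - (u ^^ Suc m) q)"
        using Suc cG module_hom.diff[OF lbu[of p 0]] by simp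
      also have "\<dots> = - b p (\<Sum>i<Suc m. (u ^^ i) (w ((v ^^ (m - i)) q)))"
        using telescope[OF lu v_def, of "Suc m" q] by simp
      also have "\<dots> = - (\<Sum>i<Suc m. b p ((u ^^ i) (w ((v ^^ (m - i)) q))))"
        by (simp only: module_hom.sum[OF lbp])
      also have "\<dots> = - (\<Sum>i\<le>m. b p ((u ^^ i) x) * b y ((v ^^ (m - i)) q) - b p ((u ^^ i) y) * b x ((v ^^ (m - i)) q))"
        unfolding wdef
        by (simp add: module_hom.diff[OF lbu] module_hom.scale[OF lbu] lessThan_Suc_atMost mult.commute)
      also have "\<dots> = coeff (- pCons 0 (G u p x * G v y q - G u p y * G v x q)) n"
        using Suc by (simp add: coeff_mult cG sum_subtractf)
      finally show ?thesis .
    qed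
  qed
  define S :: "'a poly" where "S = monom 1 1"
  have pc: "pCons 0 P = S * P" for P
    by (rule poly_eqI) (auto simp: S_def coeff_monom_mult coeff_pCons')
  define a where "a = G u x x"
  define c where "c = G u x y"
  define c' where "c' = G u y x"
  define d where "d = G u y y"
  define a2 where "a2 = G v x x"
  define c2 where "c2 = G v x y"
  define c2' where "c2' = G v y x"
  define d2 where "d2 = G v y y"
  have e1: "a - a2 = - (S * (a * c2' - c * a2))" using star[of x x] pc unfolding a_def c_def c2'_def a2_def by simp
  have e2: "c - c2 = - (S * (a * d2 - c * c2))" using star[of x y] pc unfolding a_def c_def d2_def c2_def by simp
  have e3: "c' - c2' = - (S * (c' * c2' - d * a2))" using star[of y x] pc unfolding c'_def c2'_def d_def a2_def by simp
  have e4: "d - d2 = - (S * (c' * d2 - d * c2))" using star[of y y] pc unfolding c'_def d2_def d_def c2_def by simp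
  have det: "((1 + S*c)*(1 - S*c') + S*S*a*d) * ((1 - S*c2)*(1 + S*c2') + S*S*a2*d2) = 1"
  proof -
    have q11: "(1+S*c)*(1-S*c2) + (-S*a)*(-S*d2) = 1"
    proof -
      have "(1+S*c)*(1-S*c2) + (-S*a)*(-S*d2) = 1 + S*((c - c2) + S*(a*d2 - c*c2))" by (simp add: algebra_simps)
      then show ?thesis using e2 by simp
    qed
    have q12: "(1+S*c)*(S*a2) + (-S*a)*(1+S*c2') = 0"
    proof -
      have "(1+S*c)*(S*a2) + (-S*a)*(1+S*c2') = - S*((a - a2) + S*(a*c2' - c*a2))" by (simp add: algebra_simps)
      then show ?thesis using e1 by simp
    qed
    have q21: "(S*d)*(1-S*c2) + (1-S*c')*(-S*d2) = 0"
    proof -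
      have "(S*d)*(1-S*c2) + (1-S*c')*(-S*d2) = S*((d - d2) + S*(c'*d2 - d*c2))" by (simp add: algebra_simps)
      then show ?thesis using e4 by simp
    qed
    have q22: "(S*d)*(S*a2) + (1-S*c')*(1+S*c2') = 1"
    proof -
      have "(S*d)*(S*a2) + (1-S*c')*(1+S*c2') = 1 - S*((c' - c2') + S*(c'*c2' - d*a2))" by (simp add: algebra_simps)
      then show ?thesis using e3 by simp
    qed
    have "((1 + S*c)*(1 - S*c') + S*S*a*d) * ((1 - S*c2)*(1 + S*c2') + S*S*a2*d2)
      = ((1+S*c)*(1-S*c2) + (-S*a)*(-S*d2)) * ((S*d)*(S*a2) + (1-S*c')*(1+S*c2'))
        - ((1+S*c)*(S*a2) + (-S*a)*(1+S*c2')) * ((S*d)*(1-S*c2) + (1-S*c')*(-S*d2))"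
      by (simp add: algebra_simps)
    then show ?thesis using q11 q12 q21 q22 by simp
  qed
  have cc: "c' = c"
    unfolding c_def c'_def
    by (rule poly_eqI) (simp add: cG usym_pow[OF usym symb])
  define D where "D = (1 + S*c)*(1 - S*c') + S*S*a*d"
  have "degree D = 0"
  proof -
    define D2 where "D2 = (1 - S*c2)*(1 + S*c2') + S*S*a2*d2"
    have m: "D * D2 = 1" using det unfolding D_def D2_def .
    then have "D \<noteq> 0" "D2 \<noteq> 0" by auto
    then have "degree (D * D2) = degree D + degree D2" by (rule degree_mult_eq)
    then show ?thesis using m by simp
  qed
  then have c4: "coeff D 4 = 0" by (simp add: coeff_eq_0)
  have "D = 1 + monom 1 2 * (a * d - c * c)"
    unfolding D_def cc S_def by (simp add: mult_monom algebra_simps numeral_2_eq_2)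
  then have "coeff (a * d - c * c) 2 = 0" using c4 by (simp add: coeff_monom_mult)
  then have key0: "b x ((u ^^ 2) x) * b y y - b x (u y) * b x (u y) = 0"
    unfolding a_def c_def d_def
    by (simp add: coeff_mult cG numeral_2_eq_2 x_iso bxux y_perp)
  have h1: "b x ((u ^^ 2) x) = b (u x) (u x)" using usym by (simp add: numeral_2_eq_2)
  have h2: "b x (u y) = b (u x) y" using usym symb by metis
  have key: "b (u x) y * b (u x) y = b (u x) (u x) * b y y"
    using key0 h1 h2 by simp
  define al where "al = to_ac (b (u x) y)"
  have two: "(2::'a alg_closure) = 0"
    using of_nat_CHAR[where 'a="'a alg_closure"] char2 by simp
  have tz: "t + t = 0" for t :: "'a alg_closure"
  proof -
    have "t + t = 2 * t" by simp
    then show ?thesis using two by simp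
  qed
  have sq: "to_ac (qform b (u x) * qform b y) = al ^ 2"
    unfolding al_def qform_def using key by (simp add: power2_eq_square flip: to_ac_mult)
  have uniq: "t = al" if "t ^ 2 = al ^ 2" for t
  proof -
    have "(t - al) ^ 2 = t ^ 2 - al ^ 2 - (t * al + t * al)" using two
      by (simp add: power2_eq_square algebra_simps)
    also have "\<dots> = 0" using that tz[of "t * al"] by simp
    finally show ?thesis by simp
  qed
  have "ac_sqrt (to_ac (qform b (u x) * qform b y)) = al"
    unfolding ac_sqrt_def sq by (rule the_equality) (auto intro: uniq)
  then have "a_transform b (u x) y = al + al" unfolding a_transform_def al_def by simp
  then show ?thesis using tz by simp
qed

end
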